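(* As $n\to\infty$, \[ n^2\Big(9\log2-\frac92\log3\Big)+O(n\log n)\;\ge\;\log K_n(n,n,\ldots,n,-n^2)\;\ge\;n^2\log2-\frac32n\log n+O(n). \]
   Context: $K_n(\bm{N})$, for $\bm{N}\in\mathbb{Z}^{n+1}$ with zero sum, is the number of integer vectors $(f_{ij})_{0\le i<j\le n}\in\mathbb{Z}_{\ge0}^{\binom{n+1}{2}}$ with $\sum_{j>i} f_{ij}-\sum_{k<i} f_{ki}=N_i$ for every $i$. Here $(n,\ldots,n,-n^2)\in\mathbb{Z}^{n+1}$. $\log$ is the natural logarithm. *)

theory Defs
  imports Complex_Main
begin

text \<open>Vectors are encoded as functions vanishing outside the index set.\<close>
definition kostant :: "nat \<Rightarrow> (nat \<Rightarrow> int) \<Rightarrow> nat" where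
  "kostant n N = card {f :: nat \<Rightarrow> nat \<Rightarrow> nat.
     (\<forall>i j. \<not> (i < j \<and> j \<le> n) \<longrightarrow> f i j = 0) \<and>
     (\<forall>i\<le>n. (\<Sum>j\<in>{i<..n}. int (f i j)) - (\<Sum>k<i. int (f k i)) = N i)}"

definition specialN :: "nat \<Rightarrow> nat \<Rightarrow> int" where
  "specialN n i = (if i < n then int n else - ((int n) ^ 2))"

end

theory Submission
  imports Defs "HOL-Library.FuncSet" "HOL-Analysis.Analysis" "HOL-Real_Asymp.Real_Asymp"
begin

definition psi :: "real \<Rightarrow> real" where "psi r = - ln (1 - sqrt r)"
definition Psi :: "real \<Rightarrow> real" where "Psi r = (1 - r) * ln (1 - sqrt r) + sqrt r + r / 2"

lemma Psi_deriv:
  assumes "0 < x" "x < 1"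
  shows "(Psi has_real_derivative psi x) (at x)"
proof -
  have s: "0 < sqrt x" "sqrt x < 1" using assms by auto
  have "((\<lambda>r. (1 - r) * ln (1 - sqrt r) + sqrt r + r / 2) has_real_derivative
      (- 1 * ln (1 - sqrt x) + (1 - x) * ((- (inverse (sqrt x) / 2)) / (1 - sqrt x)) + inverse (sqrt x) / 2 + 1/2)) (at x)"
    using assms s by (auto intro!: derivative_eq_intros) (simp_all add: algebra_simps)
  moreover have "- 1 * ln (1 - sqrt x) + (1 - x) * ((- (inverse (sqrt x) / 2)) / (1 - sqrt x)) + inverse (sqrt x) / 2 + 1/2 = psi x"
  proof -
    have "1 - x = (1 - sqrt x) * (1 + sqrt x)" using assms by (simp add: algebra_simps)
    then have "(1 - x) * ((- (inverse (sqrt x) / 2)) / (1 - sqrt x)) = - (1 + sqrt x) / (2 * sqrt x)"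
      using s by (simp add: field_simps)
    then show ?thesis using s unfolding psi_def by (simp add: field_simps)
  qed
  ultimately show ?thesis unfolding Psi_def by simp
qed

lemma psi_mono: "0 \<le> a \<Longrightarrow> a \<le> b \<Longrightarrow> b < 1 \<Longrightarrow> psi a \<le> psi b"
  unfolding psi_def
  by (smt (verit) ln_le_cancel_iff real_sqrt_le_mono real_sqrt_lt_1_iff real_sqrt_ge_zero)

lemma Psi_step:
  assumes "0 \<le> a" "a < b" "b < 1"
  shows "psi a * (b - a) \<le> Psi b - Psi a"
proof -
  have pos: "1 - sqrt r \<noteq> 0" if "r \<in> {a..b}" for r
  proof -
    have "r < 1" using that assms by simp
    then have "sqrt r < 1" by simp
    then show ?thesis by simp
  qed
  have c1: "continuous_on {a..b} (\<lambda>r::real. 1 - r)"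
    by (rule continuous_on_diff[OF continuous_on_const continuous_on_id])
  have cs: "continuous_on {a..b} (\<lambda>r::real. sqrt r)"
    by (rule continuous_on_real_sqrt[OF continuous_on_id])
  have c2: "continuous_on {a..b} (\<lambda>r. ln (1 - sqrt r))"
    by (rule continuous_on_ln[OF continuous_on_diff[OF continuous_on_const cs]]) (use pos in blast)
  have c4: "continuous_on {a..b} (\<lambda>r::real. r / 2)"
    by (rule continuous_on_divide[OF continuous_on_id continuous_on_const]) simp
  have c3: "continuous_on {a..b} (\<lambda>r. (1 - r) * ln (1 - sqrt r))"
    by (rule continuous_on_mult'[OF c1 c2])
  have cont: "continuous_on {a..b} Psi"
    unfolding Psi_def by (rule continuous_on_add[OF continuous_on_add[OF c3 cs] c4])
  have dif: "Psi differentiable (at x)" if x: "a < x" "x < b" for x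
  proof -
    from x have "0 < x" "x < 1" using assms by auto
    then show "Psi differentiable (at x)" using Psi_deriv real_differentiable_def by blast
  qed
  obtain l z where z: "a < z" "z < b" "DERIV Psi z :> l" "Psi b - Psi a = (b - a) * l"
    using MVT[OF assms(2) cont dif] by blast
  have "l = psi z" using DERIV_unique[OF z(3) Psi_deriv[of z]] z assms by auto
  moreover have "psi a \<le> psi z" using psi_mono[of a z] z assms by auto
  ultimately show ?thesis using z assms by (simp add: mult.commute mult_right_mono)
qed

lemma c0_bound: "9 * ln 2 - 9/2 * ln 3 \<ge> (1.26::real)"
proof -
  have "exp (7::real) = exp 1 ^ 7" by (metis exp_of_nat_mult mult.right_neutral of_nat_numeral)
  also have "\<dots> \<le> (272/100) ^ 7" using e_less_272 by (intro power_mono) auto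
  also have "\<dots> \<le> (4/3::real) ^ 25" by (simp add: power_divide divide_simps)
  finally have "7 \<le> ln ((4/3::real)^25)" by (simp add: ln_ge_iff)
  also have "\<dots> = 25 * (2 * ln 2 - ln 3)" by (simp add: ln_realpow ln_div ln_mult flip: power2_eq_square ln_realpow[of 2 2, simplified])
  finally show ?thesis by simp
qed

lemma Psi0: "Psi 0 = 0" by (simp add: Psi_def)
lemma psi0: "psi 0 = 0" by (simp add: psi_def)

lemma Psi_le: "0 \<le> r \<Longrightarrow> r < 1 \<Longrightarrow> Psi r \<le> 3/2"
proof -
  assume r: "0 \<le> r" "r < 1"
  have "sqrt r < 1" "0 \<le> sqrt r" using r by (auto simp: real_sqrt_lt_1_iff)
  then have "ln (1 - sqrt r) \<le> 0" by simp
  then have "(1 - r) * ln (1 - sqrt r) \<le> 0" using r by (simp add: mult_nonneg_nonpos)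
  moreover have "sqrt r \<le> 1" using \<open>sqrt r < 1\<close> by simp
  ultimately show ?thesis unfolding Psi_def using r by linarith
qed

lemma psi_last:
  assumes "m \<ge> (2::nat)"
  shows "psi (real (m - 1) / real m) \<le> ln (2 * real m)"
proof -
  have m: "real m \<ge> 2" using assms by simp
  have e: "real (m - 1) / real m = 1 - 1 / real m" using assms m by (simp add: of_nat_diff field_simps)
  have "sqrt (1 - 1 / real m) \<le> 1 - 1 / (2 * real m)"
  proof (rule real_le_lsqrt)
    show "0 \<le> 1 - 1 / (2 * real m)" using m by simp
    show "1 - 1 / real m \<le> (1 - 1 / (2 * real m))\<^sup>2" using m by (simp add: power2_eq_square field_simps)
  qed
  then have h: "1 / (2 * real m) \<le> 1 - sqrt (1 - 1 / real m)" by simp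
  have p: "0 < 1 / (2 * real m)" using m by simp
  have "psi (1 - 1 / real m) = - ln (1 - sqrt (1 - 1 / real m))" by (simp add: psi_def)
  also have "\<dots> \<le> - ln (1 / (2 * real m))" using h p by simp
  also have "\<dots> = ln (2 * real m)" using m by (simp add: ln_div)
  finally show ?thesis using e by simp
qed

lemma psi_sum:
  assumes "m \<ge> (1::nat)"
  shows "(\<Sum>k<m. psi (real k / real m)) \<le> 3/2 * real m + ln (2 * real m)"
proof (cases "m = 1")
  case True then show ?thesis by (simp add: psi0)
next
  case False
  then have m2: "m \<ge> 2" using assms by simp
  have mpos: "real m > 0" using m2 by simp
  have step: "psi (real k / real m) \<le> real m * (Psi (real (Suc k) / real m) - Psi (real k / real m))"
    if "k < m - 1" for k
  proof -
    have "psi (real k / real m) * (real (Suc k) / real m - real k / real m) \<le> Psi (real (Suc k) / real m) - Psi (real k / real m)"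
      using that m2 by (intro Psi_step) (auto simp: field_simps)
    moreover have "real (Suc k) / real m - real k / real m = 1 / real m" using mpos by (simp add: field_simps)
    ultimately show ?thesis using mpos by (simp add: field_simps)
  qed
  have tel: "(\<Sum>k<m - 1. Psi (real (Suc k) / real m) - Psi (real k / real m)) = Psi (real (m - 1) / real m) - Psi (real 0 / real m)"
    by (rule sum_lessThan_telescope)
  have "(\<Sum>k<m - 1. psi (real k / real m)) \<le> (\<Sum>k<m - 1. real m * (Psi (real (Suc k) / real m) - Psi (real k / real m)))"
    by (intro sum_mono step) simp
  also have "\<dots> = real m * (\<Sum>k<m - 1. Psi (real (Suc k) / real m) - Psi (real k / real m))"
    by (simp only: sum_distrib_left)
  also have "\<dots> = real m * Psi (real (m - 1) / real m)"
    unfolding tel by (simp add: Psi0)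
  also have "\<dots> \<le> real m * (3/2)"
    using Psi_le[of "real (m - 1) / real m"] m2 mpos by (intro mult_left_mono) auto
  finally have a: "(\<Sum>k<m - 1. psi (real k / real m)) \<le> 3/2 * real m" by simp
  have "(\<Sum>k<m. psi (real k / real m)) = (\<Sum>k<m - 1. psi (real k / real m)) + psi (real (m - 1) / real m)"
  proof -
    have e: "Suc (m - 1) = m" using m2 by simp
    have "(\<Sum>k<Suc (m - 1). psi (real k / real m)) = (\<Sum>k<m - 1. psi (real k / real m)) + psi (real (m - 1) / real m)"
      by (rule sum.lessThan_Suc)
    then show ?thesis unfolding e .
  qed
  then show ?thesis using a psi_last[OF m2] by linarith
qed

definition KS :: "nat \<Rightarrow> (nat \<Rightarrow> int) \<Rightarrow> (nat \<Rightarrow> nat \<Rightarrow> nat) set" where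
  "KS n N = {f :: nat \<Rightarrow> nat \<Rightarrow> nat.
     (\<forall>i j. \<not> (i < j \<and> j \<le> n) \<longrightarrow> f i j = 0) \<and>
     (\<forall>i\<le>n. (\<Sum>j\<in>{i<..n}. int (f i j)) - (\<Sum>k<i. int (f k i)) = N i)}"

lemma kostant_KS: "kostant n N = card (KS n N)"
  by (simp add: kostant_def KS_def)

lemma pow2_sum: "(\<Sum>k<i. (2::nat)^k) + 1 = 2^i"
  by (induction i) auto

lemma KS_out_bound:
  assumes f: "f \<in> KS n (specialN n)"
  shows "i \<le> n \<Longrightarrow> (\<Sum>j\<in>{i<..n}. f i j) \<le> n * 2^i"
proof (induction i rule: less_induct)
  case (less i)
  show ?case
  proof (cases "i < n")
    case False
    then have "i = n" using less.prems by simp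
    then show ?thesis by simp
  next
    case True
    have eq: "(\<Sum>j\<in>{i<..n}. int (f i j)) - (\<Sum>k<i. int (f k i)) = int n"
      using f less.prems True unfolding KS_def specialN_def by auto
    then have eq': "(\<Sum>j\<in>{i<..n}. f i j) = n + (\<Sum>k<i. f k i)"
      by (simp flip: of_nat_sum)
    have "(\<Sum>k<i. f k i) \<le> (\<Sum>k<i. n * 2^k)"
    proof (rule sum_mono)
      fix k assume k: "k \<in> {..<i}"
      have "f k i \<le> (\<Sum>j\<in>{k<..n}. f k j)"
        using k less.prems by (intro member_le_sum) auto
      also have "\<dots> \<le> n * 2^k" using less.IH[of k] k less.prems by auto
      finally show "f k i \<le> n * 2^k" .
    qed
    also have "\<dots> = n * (\<Sum>k<i. 2^k)" by (simp add: sum_distrib_left)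
    finally have "(\<Sum>j\<in>{i<..n}. f i j) \<le> n + n * (\<Sum>k<i. 2^k)" using eq' by simp
    also have "\<dots> = n * 2^i" using pow2_sum[of i] by (metis add.commute mult.commute mult_Suc plus_1_eq_Suc)
    finally show ?thesis .
  qed
qed

lemma KS_entry_bound:
  assumes f: "f \<in> KS n (specialN n)"
  shows "f i j \<le> n * 2^n"
proof (cases "i < j \<and> j \<le> n")
  case True
  have "f i j \<le> (\<Sum>j\<in>{i<..n}. f i j)" using True by (intro member_le_sum) auto
  also have "\<dots> \<le> n * 2^i" using KS_out_bound[OF f, of i] True by simp
  also have "\<dots> \<le> n * 2^n" using True by simp
  finally show ?thesis .
next
  case False then show ?thesis using f unfolding KS_def by auto
qed

definition Eset :: "nat \<Rightarrow> (nat \<times> nat) set" where "Eset n = (SIGMA i:{..n}. {i<..n})"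

lemma Eset_iff: "(i, j) \<in> Eset n \<longleftrightarrow> i < j \<and> j \<le> n" by (auto simp: Eset_def)
lemma finite_Eset: "finite (Eset n)" by (simp add: Eset_def)

definition emb :: "nat \<Rightarrow> (nat \<times> nat \<Rightarrow> nat) \<Rightarrow> nat \<Rightarrow> nat \<Rightarrow> nat" where
  "emb n g = (\<lambda>i j. if (i, j) \<in> Eset n then g (i, j) else 0)"

definition Box :: "nat \<Rightarrow> nat \<Rightarrow> (nat \<Rightarrow> nat \<Rightarrow> nat) set" where
  "Box n M = emb n ` (PiE (Eset n) (\<lambda>_. {..M}))"

lemma inj_emb: "inj_on (emb n) (PiE (Eset n) (\<lambda>_. {..M}))"
proof (rule inj_onI)
  fix g h assume g: "g \<in> PiE (Eset n) (\<lambda>_. {..M})" and h: "h \<in> PiE (Eset n) (\<lambda>_. {..M})"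
    and e: "emb n g = emb n h"
  show "g = h"
  proof (rule ext)
    fix p :: "nat \<times> nat"
    obtain i j where p: "p = (i, j)" by fastforce
    show "g p = h p"
    proof (cases "p \<in> Eset n")
      case True
      have "emb n g i j = emb n h i j" using e by simp
      then show ?thesis using True p by (simp add: emb_def)
    next
      case False then show ?thesis using g h p by (auto simp: PiE_def extensional_def)
    qed
  qed
qed

lemma finite_Box: "finite (Box n M)"
  unfolding Box_def by (intro finite_imageI finite_PiE finite_Eset) auto

lemma KS_sub_Box: "KS n (specialN n) \<subseteq> Box n (n * 2^n)"
proof
  fix f assume f: "f \<in> KS n (specialN n)"
  let ?g = "\<lambda>p. if p \<in> Eset n then f (fst p) (snd p) else undefined"
  have g: "?g \<in> PiE (Eset n) (\<lambda>_. {..n * 2^n})"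
    using KS_entry_bound[OF f] by (auto simp: PiE_def extensional_def)
  have e: "emb n ?g = f"
  proof (intro ext)
    fix i j
    have van: "\<not> (i < j \<and> j \<le> n) \<Longrightarrow> f i j = 0" using f unfolding KS_def by blast
    show "emb n ?g i j = f i j"
      using van by (cases "(i, j) \<in> Eset n") (simp_all add: emb_def Eset_iff)
  qed
  show "f \<in> Box n (n * 2^n)" unfolding Box_def using image_eqI[where f="emb n", OF e[symmetric] g] .
qed

lemma finite_KS: "finite (KS n (specialN n))"
  using finite_subset[OF KS_sub_Box finite_Box] .

lemma weight_KS:
  fixes x :: "nat \<Rightarrow> real"
  assumes f: "f \<in> KS n N"
  shows "(\<Sum>i\<le>n. \<Sum>j\<le>n. real (f i j) * (x i - x j)) = (\<Sum>i\<le>n. x i * of_int (N i))"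
proof -
  have van: "\<And>i j. \<not> (i < j \<and> j \<le> n) \<Longrightarrow> f i j = 0" using f by (auto simp: KS_def)
  have out: "(\<Sum>j\<le>n. real (f i j)) = (\<Sum>j\<in>{i<..n}. real (f i j))" if "i \<le> n" for i
    by (rule sum.mono_neutral_right) (auto simp: van)
  have inn: "(\<Sum>k\<le>n. real (f k i)) = (\<Sum>k<i. real (f k i))" if "i \<le> n" for i
    using that by (intro sum.mono_neutral_right) (auto simp: van)
  have fl: "(\<Sum>j\<le>n. real (f i j)) - (\<Sum>k\<le>n. real (f k i)) = of_int (N i)" if "i \<le> n" for i
  proof -
    have "(\<Sum>j\<in>{i<..n}. int (f i j)) - (\<Sum>k<i. int (f k i)) = N i" using f that by (auto simp: KS_def)
    then have "of_int ((\<Sum>j\<in>{i<..n}. int (f i j)) - (\<Sum>k<i. int (f k i))) = (of_int (N i) :: real)" by simp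
    then show ?thesis using out[OF that] inn[OF that] by simp
  qed
  have "(\<Sum>i\<le>n. \<Sum>j\<le>n. real (f i j) * (x i - x j))
      = (\<Sum>i\<le>n. \<Sum>j\<le>n. real (f i j) * x i) - (\<Sum>i\<le>n. \<Sum>j\<le>n. real (f i j) * x j)"
    by (simp add: algebra_simps sum_subtractf)
  also have "(\<Sum>i\<le>n. \<Sum>j\<le>n. real (f i j) * x j) = (\<Sum>j\<le>n. \<Sum>i\<le>n. real (f i j) * x j)"
    by (rule sum.swap)
  also have "(\<Sum>i\<le>n. \<Sum>j\<le>n. real (f i j) * x i) - (\<Sum>j\<le>n. \<Sum>i\<le>n. real (f i j) * x j)
      = (\<Sum>i\<le>n. x i * ((\<Sum>j\<le>n. real (f i j)) - (\<Sum>k\<le>n. real (f k i))))"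
    by (simp add: sum_distrib_left sum_distrib_right algebra_simps sum_subtractf)
  also have "\<dots> = (\<Sum>i\<le>n. x i * of_int (N i))"
    by (rule sum.cong) (auto simp: fl)
  finally show ?thesis .
qed

lemma A_emb:
  fixes x :: "nat \<Rightarrow> real"
  shows "(\<Sum>i\<le>n. \<Sum>j\<le>n. real (emb n g i j) * (x i - x j))
        = (\<Sum>e\<in>Eset n. real (g e) * (x (fst e) - x (snd e)))"
proof -
  have sub: "Eset n \<subseteq> {..n} \<times> {..n}" by (auto simp: Eset_def)
  have "(\<Sum>i\<le>n. \<Sum>j\<le>n. real (emb n g i j) * (x i - x j))
      = (\<Sum>e\<in>{..n} \<times> {..n}. real (emb n g (fst e) (snd e)) * (x (fst e) - x (snd e)))"
    by (simp add: sum.cartesian_product case_prod_beta)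
  also have "\<dots> = (\<Sum>e\<in>Eset n. real (emb n g (fst e) (snd e)) * (x (fst e) - x (snd e)))"
    using sub by (intro sum.mono_neutral_right) (auto simp: emb_def)
  also have "\<dots> = (\<Sum>e\<in>Eset n. real (g e) * (x (fst e) - x (snd e)))"
    by (intro sum.cong) (auto simp: emb_def)
  finally show ?thesis .
qed

lemma geom_le:
  fixes q :: real
  assumes "0 \<le> q" "q < 1"
  shows "(\<Sum>m\<le>M. q ^ m) \<le> 1 / (1 - q)"
proof -
  have "(\<Sum>m\<le>M. q ^ m) = (\<Sum>m<Suc M. q ^ m)" by (simp add: lessThan_Suc_atMost)
  also have "\<dots> = (1 - q ^ Suc M) / (1 - q)" using assms by (subst sum_gp_strict) simp
  also have "\<dots> \<le> 1 / (1 - q)" using assms by (intro divide_right_mono) auto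
  finally show ?thesis .
qed

lemma genfun_bound:
  fixes x :: "nat \<Rightarrow> real"
  assumes inc: "\<And>i j. i < j \<Longrightarrow> j \<le> n \<Longrightarrow> x i < x j"
  shows "real (card (KS n (specialN n))) * exp (\<Sum>i\<le>n. x i * of_int (specialN n i))
       \<le> (\<Prod>e\<in>Eset n. 1 / (1 - exp (x (fst e) - x (snd e))))"
proof -
  let ?M = "n * 2^n"
  let ?A = "\<lambda>f. (\<Sum>i\<le>n. \<Sum>j\<le>n. real (f i j) * (x i - x j))"
  let ?L = "\<Sum>i\<le>n. x i * of_int (specialN n i)"
  let ?P = "PiE (Eset n) (\<lambda>_. {..?M})"
  let ?q = "\<lambda>e. exp (x (fst e) - x (snd e))"
  have "real (card (KS n (specialN n))) * exp ?L = (\<Sum>f\<in>KS n (specialN n). exp ?L)" by simp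
  also have "\<dots> = (\<Sum>f\<in>KS n (specialN n). exp (?A f))"
    by (intro sum.cong refl) (simp add: weight_KS)
  also have "\<dots> \<le> (\<Sum>f\<in>Box n ?M. exp (?A f))"
    by (intro sum_mono2 finite_Box KS_sub_Box) auto
  also have "\<dots> = (\<Sum>g\<in>?P. exp (?A (emb n g)))"
    unfolding Box_def by (rule sum.reindex[OF inj_emb, unfolded comp_def])
  also have "\<dots> = (\<Sum>g\<in>?P. \<Prod>e\<in>Eset n. ?q e ^ g e)"
  proof (intro sum.cong refl)
    fix g
    have "exp (?A (emb n g)) = exp (\<Sum>e\<in>Eset n. real (g e) * (x (fst e) - x (snd e)))"
      by (simp only: A_emb)
    also have "\<dots> = (\<Prod>e\<in>Eset n. ?q e ^ g e)"
      by (simp add: exp_sum finite_Eset exp_of_nat_mult)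
    finally show "exp (?A (emb n g)) = (\<Prod>e\<in>Eset n. ?q e ^ g e)" .
  qed
  also have "\<dots> = (\<Prod>e\<in>Eset n. \<Sum>m\<in>{..?M}. ?q e ^ m)"
    by (rule prod_sum_PiE[symmetric]) (auto simp: finite_Eset)
  also have "\<dots> \<le> (\<Prod>e\<in>Eset n. 1 / (1 - ?q e))"
  proof (intro prod_mono conjI)
    fix e assume e: "e \<in> Eset n"
    have "x (fst e) < x (snd e)" using e inc by (cases e) (auto simp: Eset_iff)
    then have "?q e < 1" by simp
    then show "(\<Sum>m\<in>{..?M}. ?q e ^ m) \<le> 1 / (1 - ?q e)" by (intro geom_le) auto
    show "0 \<le> (\<Sum>m\<in>{..?M}. ?q e ^ m)" by (intro sum_nonneg) auto
  qed
  finally show ?thesis .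
qed

lemma ln_fact_sum: "(\<Sum>i<n. ln (real i + 1)) = ln (fact n)"
proof (induction n)
  case (Suc n)
  have f: "(fact (Suc n) :: real) = (real n + 1) * fact n" by simp
  have "ln (fact (Suc n) :: real) = ln (real n + 1) + ln (fact n)"
    unfolding f by (simp add: ln_mult)
  then show ?case using Suc by simp
qed simp

lemma fact_exp: "(x::real) \<ge> 0 \<Longrightarrow> x ^ n / fact n \<le> exp x"
proof -
  assume x: "x \<ge> 0"
  have s: "summable (\<lambda>k. x ^ k /\<^sub>R fact k)" using exp_converges sums_summable by blast
  have "(\<Sum>k\<in>{n}. x ^ k /\<^sub>R fact k) \<le> suminf (\<lambda>k. x ^ k /\<^sub>R fact k)"
    by (rule sum_le_suminf[OF s]) (use x in auto)
  also have "\<dots> = exp x" using exp_converges sums_unique by metis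
  finally show ?thesis by (simp add: divide_inverse_commute)
qed

lemma ln_fact_lower: "n \<ge> 1 \<Longrightarrow> real n * ln (real n) - real n \<le> ln (fact n)"
proof -
  assume n: "n \<ge> 1"
  have "real n ^ n / fact n \<le> exp (real n)" by (rule fact_exp) simp
  then have "real n ^ n \<le> exp (real n) * fact n" by (simp add: divide_simps)
  then have "ln (real n ^ n) \<le> ln (exp (real n) * fact n)" using n by (subst ln_le_cancel_iff) auto
  then show ?thesis using n by (simp add: ln_mult ln_realpow)
qed

lemma pair_sum_conv:
  "(\<Sum>e\<in>Eset n. h (fst e) (snd e)) = (\<Sum>j\<le>n. \<Sum>i<j. h i j)"
proof -
  have "(\<Sum>i\<le>n. \<Sum>j\<in>{i<..n}. h i j) = (\<Sum>(i,j)\<in>Eset n. h i j)"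
    unfolding Eset_def by (rule sum.Sigma) auto
  then have "(\<Sum>e\<in>Eset n. h (fst e) (snd e)) = (\<Sum>i\<le>n. \<Sum>j\<in>{i<..n}. h i j)"
    by (simp add: case_prod_beta)
  also have "\<dots> = (\<Sum>i<Suc n. \<Sum>j\<in>{Suc i..n}. h i j)"
    by (intro sum.cong) (auto simp: greaterThanAtMost_eq_atLeastAtMost_diff lessThan_Suc_atMost atLeastSucAtMost_greaterThanAtMost)
  also have "\<dots> = (\<Sum>i<n. \<Sum>j\<in>{Suc i..n}. h i j)" by simp
  also have "\<dots> = (\<Sum>j\<le>n. \<Sum>i<j. h i j)" by (rule sum.nested_swap'[symmetric])
  finally show ?thesis .
qed

lemma gauss_real: "(\<Sum>j\<le>n. real j + 1) = (real n + 1) * (real n + 2) / 2"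
  by (induction n) (simp_all add: field_simps)

lemma pair_bound_ind:
  "(\<Sum>j\<le>n. 3/2 * (real j + 1) + ln (2 * (real j + 1))) \<le> 3/4 * (real n + 1) * (real n + 2) + (real n + 1) * ln (2 * (real n + 1))"
proof -
  have a: "(\<Sum>j\<le>n. 3/2 * (real j + 1)) = 3/4 * (real n + 1) * (real n + 2)"
  proof -
    have "(\<Sum>j\<le>n. 3/2 * (real j + 1)) = 3/2 * (\<Sum>j\<le>n. real j + 1)" by (simp only: sum_distrib_left)
    then show ?thesis by (simp add: gauss_real)
  qed
  have "(\<Sum>j\<le>n. ln (2 * (real j + 1))) \<le> (\<Sum>j\<le>n. ln (2 * (real n + 1)))"
    by (intro sum_mono) simp
  also have "\<dots> = (real n + 1) * ln (2 * (real n + 1))" by simp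
  finally show ?thesis using a by (simp add: sum.distrib)
qed

lemma upper_explicit:
  assumes n: "n \<ge> 1"
  shows "ln (real (kostant n (specialN n))) \<le> 5/4 * real n^2 + 11/4 * real n + 3/2 + (real n + 1) * ln (2 * (real n + 1))"
proof -
  define x where "x = (\<lambda>i::nat. ln (real i + 1) / 2)"
  let ?K = "real (card (KS n (specialN n)))"
  let ?L = "\<Sum>i\<le>n. x i * of_int (specialN n i)"
  have inc: "\<And>i j. i < j \<Longrightarrow> j \<le> n \<Longrightarrow> x i < x j" by (simp add: x_def)
  have gb: "?K * exp ?L \<le> (\<Prod>e\<in>Eset n. 1 / (1 - exp (x (fst e) - x (snd e))))"
    by (rule genfun_bound[OF inc])
  have q: "exp (x i - x j) = sqrt ((real i + 1) / (real j + 1))" for i j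
  proof -
    have "exp (x i - x j) = exp (ln (sqrt (real i + 1)) - ln (sqrt (real j + 1)))"
      by (simp add: x_def ln_sqrt)
    also have "\<dots> = sqrt (real i + 1) / sqrt (real j + 1)" by (simp add: exp_diff)
    finally show ?thesis by (simp add: real_sqrt_divide)
  qed
  have qlt: "sqrt ((real i + 1) / (real j + 1)) < 1" if "i < j" for i j :: nat
    using that by (simp add: real_sqrt_lt_1_iff)
  have L: "?L = real n * (\<Sum>i<n. x i) - (real n)^2 * x n"
  proof -
    have "?L = (\<Sum>i<n. x i * of_int (specialN n i)) + x n * of_int (specialN n n)"
      by (simp only: lessThan_Suc_atMost[symmetric] sum.lessThan_Suc)
    moreover have "(\<Sum>i<n. x i * of_int (specialN n i)) = (\<Sum>i<n. x i * real n)"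
      by (intro sum.cong) (auto simp: specialN_def)
    moreover have "(\<Sum>i<n. x i * real n) = real n * (\<Sum>i<n. x i)"
      by (subst sum_distrib_left) (simp add: mult.commute)
    moreover have "x n * of_int (specialN n n) = - ((real n)^2 * x n)"
      by (simp add: specialN_def)
    ultimately show ?thesis by simp
  qed
  have Lb: "- ?L \<le> (real n)^2 / 2 + real n / 2"
  proof -
    have sx: "(\<Sum>i<n. x i) = ln (fact n) / 2" by (simp add: x_def sum_divide_distrib[symmetric] ln_fact_sum)
    have lf: "real n * ln (real n) - real n \<le> ln (fact n)" by (rule ln_fact_lower[OF n])
    have r: "ln (real n + 1) - ln (real n) \<le> 1 / real n"
    proof -
      have e1: "1 + 1 / real n = (real n + 1) / real n" using n by (simp add: field_simps)
      have "ln (real n + 1) - ln (real n) = ln ((real n + 1) / real n)"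
        using n by (simp add: ln_div)
      then have "ln (real n + 1) - ln (real n) = ln (1 + 1 / real n)" unfolding e1 .
      also have "\<dots> \<le> 1 / real n" by (rule ln_add_one_self_le_self) simp
      finally show ?thesis .
    qed
    have "- ?L = (real n)^2 * ln (real n + 1) / 2 - real n * ln (fact n) / 2"
      using L sx by (simp add: x_def)
    also have "\<dots> \<le> (real n)^2 * ln (real n + 1) / 2 - real n * (real n * ln (real n) - real n) / 2"
      using lf by (simp add: mult_left_mono)
    also have "\<dots> = (real n)^2 * (ln (real n + 1) - ln (real n)) / 2 + (real n)^2 / 2"
      by (simp add: power2_eq_square field_simps)
    also have "\<dots> \<le> (real n)^2 * (1 / real n) / 2 + (real n)^2 / 2"
      using mult_left_mono[OF r, of "(real n)^2"] by simp
    also have "\<dots> = (real n)^2 / 2 + real n / 2" using n by (simp add: power2_eq_square)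
    finally show ?thesis .
  qed
  have pos: "\<And>e. e \<in> Eset n \<Longrightarrow> 0 < 1 / (1 - exp (x (fst e) - x (snd e)))"
    using qlt q by (auto simp: Eset_def)
  have lnP: "ln (\<Prod>e\<in>Eset n. 1 / (1 - exp (x (fst e) - x (snd e))))
       = (\<Sum>e\<in>Eset n. psi ((real (fst e) + 1) / (real (snd e) + 1)))"
  proof -
    have "ln (\<Prod>e\<in>Eset n. 1 / (1 - exp (x (fst e) - x (snd e))))
       = (\<Sum>e\<in>Eset n. ln (1 / (1 - exp (x (fst e) - x (snd e)))))"
      by (rule ln_prod[OF finite_Eset]) (use pos in force)
    also have "\<dots> = (\<Sum>e\<in>Eset n. psi ((real (fst e) + 1) / (real (snd e) + 1)))"
    proof (rule sum.cong[OF refl])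
      fix e :: "nat \<times> nat"
      have l: "ln (1 / y) = - ln y" for y :: real by (simp add: ln_div)
      show "ln (1 / (1 - exp (x (fst e) - x (snd e)))) = psi ((real (fst e) + 1) / (real (snd e) + 1))"
        unfolding l q psi_def ..
    qed
    finally show ?thesis .
  qed
  also have "\<dots> = (\<Sum>j\<le>n. \<Sum>i<j. psi ((real i + 1) / (real j + 1)))"
    by (rule pair_sum_conv)
  also have "\<dots> \<le> (\<Sum>j\<le>n. 3/2 * (real j + 1) + ln (2 * (real j + 1)))"
  proof (rule sum_mono)
    fix j
    have "(\<Sum>i<j. psi ((real i + 1) / (real j + 1))) = (\<Sum>k<Suc j. psi (real k / real (Suc j)))"
      by (subst sum.lessThan_Suc_shift) (simp add: psi0 add.commute)
    also have "\<dots> \<le> 3/2 * real (Suc j) + ln (2 * real (Suc j))" by (rule psi_sum) simp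
    finally show "(\<Sum>i<j. psi ((real i + 1) / (real j + 1))) \<le> 3/2 * (real j + 1) + ln (2 * (real j + 1))"
      by (simp add: add.commute)
  qed
  also have "\<dots> \<le> 3/4 * (real n + 1) * (real n + 2) + (real n + 1) * ln (2 * (real n + 1))"
    by (rule pair_bound_ind)
  finally have pb: "ln (\<Prod>e\<in>Eset n. 1 / (1 - exp (x (fst e) - x (snd e)))) \<le> 3/4 * (real n + 1) * (real n + 2) + (real n + 1) * ln (2 * (real n + 1))" .
  show ?thesis
  proof (cases "?K = 0")
    case True
    have "0 \<le> (real n + 1) * ln (2 * (real n + 1))" by simp
    then show ?thesis using True by (simp add: kostant_KS)
  next
    case False
    then have Kp: "?K > 0" by simp
    have "ln (?K * exp ?L) \<le> ln (\<Prod>e\<in>Eset n. 1 / (1 - exp (x (fst e) - x (snd e))))"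
    proof -
      have ppos: "0 < (\<Prod>e\<in>Eset n. 1 / (1 - exp (x (fst e) - x (snd e))))"
        by (rule prod_pos) (use pos in auto)
      show ?thesis using gb Kp ppos by (subst ln_le_cancel_iff) auto
    qed
    then have "ln ?K + ?L \<le> 3/4 * (real n + 1) * (real n + 2) + (real n + 1) * ln (2 * (real n + 1))"
      using pb Kp by (simp add: ln_mult)
    moreover have "3/4 * (real n + 1) * (real n + 2) + ((real n)^2 / 2 + real n / 2) = 5/4 * real n^2 + 11/4 * real n + 3/2"
      by (simp add: field_simps power2_eq_square)
    ultimately have "ln ?K \<le> 5/4 * real n^2 + 11/4 * real n + 3/2 + (real n + 1) * ln (2 * (real n + 1))"
      using Lb by linarith
    then show ?thesis by (simp only: kostant_KS)
  qed
qed

definition SB :: "nat set \<Rightarrow> nat \<Rightarrow> (nat \<Rightarrow> nat) set" where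
  "SB J B = {h. (\<forall>j. j \<notin> J \<longrightarrow> h j = 0) \<and> sum h J \<le> B}"

lemma SB_insert:
  assumes x: "x \<notin> J" and fin: "finite J"
  shows "SB (insert x J) B = (\<Union>v\<in>{..B}. (\<lambda>h. h(x := v)) ` SB J (B - v))"
proof
  show "SB (insert x J) B \<subseteq> (\<Union>v\<in>{..B}. (\<lambda>h. h(x := v)) ` SB J (B - v))"
  proof
    fix h assume h: "h \<in> SB (insert x J) B"
    have s: "sum h (insert x J) = h x + sum h J" using x fin by simp
    have hx: "h x \<le> B" using h s by (simp add: SB_def)
    have "h(x := 0) \<in> SB J (B - h x)"
    proof -
      have "sum (h(x := 0)) J = sum h J" using x by (intro sum.cong) auto
      then show ?thesis using h s x by (auto simp: SB_def)
    qed
    moreover have "h = (h(x := 0))(x := h x)" by simp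
    ultimately show "h \<in> (\<Union>v\<in>{..B}. (\<lambda>h. h(x := v)) ` SB J (B - v))" using hx by blast
  qed
next
  show "(\<Union>v\<in>{..B}. (\<lambda>h. h(x := v)) ` SB J (B - v)) \<subseteq> SB (insert x J) B"
  proof (intro subsetI)
    fix y assume "y \<in> (\<Union>v\<in>{..B}. (\<lambda>h. h(x := v)) ` SB J (B - v))"
    then obtain v h where v: "v \<in> {..B}" and h: "h \<in> SB J (B - v)" and y: "y = h(x := v)" by blast
    have "sum (h(x := v)) J = sum h J" using x by (intro sum.cong) auto
    then have "sum (h(x := v)) (insert x J) = v + sum h J" using x fin by simp
    then show "y \<in> SB (insert x J) B" using h v y by (auto simp: SB_def)
  qed
qed

lemma SB_card: "finite J \<Longrightarrow> finite (SB J B) \<and> card (SB J B) = (B + card J) choose B"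
proof (induction J arbitrary: B rule: finite_induct)
  case empty
  have "SB {} B = {\<lambda>_. 0}" by (auto simp: SB_def)
  then show ?case by simp
next
  case (insert x J)
  let ?A = "\<lambda>v. (\<lambda>h. h(x := v)) ` SB J (B - v)"
  have inj: "inj_on (\<lambda>h. h(x := v)) (SB J (B - v))" for v
  proof (rule inj_onI)
    fix g h assume g: "g \<in> SB J (B - v)" and h: "h \<in> SB J (B - v)" and e: "g(x := v) = h(x := v)"
    have "g x = 0" "h x = 0" using g h insert.hyps by (auto simp: SB_def)
    then show "g = h" using e by (metis fun_upd_triv fun_upd_upd)
  qed
  have finA: "\<forall>v\<in>{..B}. finite (?A v)" using insert.IH by blast
  have disj: "\<forall>v\<in>{..B}. \<forall>w\<in>{..B}. v \<noteq> w \<longrightarrow> ?A v \<inter> ?A w = {}"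
    by (force dest: fun_cong[of _ _ x])
  have eq: "SB (insert x J) B = (\<Union>v\<in>{..B}. ?A v)" by (rule SB_insert[OF insert.hyps(2,1)])
  have "card (SB (insert x J) B) = (\<Sum>v\<in>{..B}. card (?A v))"
    unfolding eq by (rule card_UN_disjoint[OF _ finA disj]) simp
  also have "\<dots> = (\<Sum>v\<in>{..B}. (B - v + card J) choose (B - v))"
    using insert.IH by (intro sum.cong refl) (simp add: card_image[OF inj])
  also have "\<dots> = (\<Sum>u\<le>B. (card J + u) choose u)"
  proof -
    have "(\<Sum>v\<in>{..B}. (B - v + card J) choose (B - v)) = (\<Sum>v<Suc B. (\<lambda>u. (card J + u) choose u) (Suc B - Suc v))"
      by (simp add: lessThan_Suc_atMost add.commute)
    also have "\<dots> = (\<Sum>u<Suc B. (card J + u) choose u)" by (rule sum.nat_diff_reindex)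
    finally show ?thesis by (simp add: lessThan_Suc_atMost)
  qed
  also have "\<dots> = Suc (card J + B) choose B" by (rule sum_choose_lower)
  also have "\<dots> = (B + card (insert x J)) choose B" using insert.hyps by (simp add: add.commute)
  moreover have "finite (SB (insert x J) B)"
    unfolding eq using finA by blast
  ultimately show ?case by simp
qed

definition Gfam :: "nat \<Rightarrow> nat \<Rightarrow> (nat \<Rightarrow> nat) set" where
  "Gfam n i = SB {i<..<n} n"

definition Phi :: "nat \<Rightarrow> (nat \<Rightarrow> nat \<Rightarrow> nat) \<Rightarrow> nat \<Rightarrow> nat \<Rightarrow> nat" where
  "Phi n G = (\<lambda>i j. if i < n then (if j < n then G i j else if j = n then
       n + (\<Sum>k<i. G k i) - (\<Sum>l\<in>{i<..<n}. G i l) else 0) else 0)"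

lemma Phi_in_KS:
  assumes G: "G \<in> PiE {..<n} (Gfam n)"
  shows "Phi n G \<in> KS n (specialN n)"
proof -
  have van: "G i j = 0" if "i < n" "j \<notin> {i<..<n}" for i j
    using G that by (auto simp: Gfam_def SB_def PiE_def Pi_def)
  have outle: "(\<Sum>l\<in>{i<..<n}. G i l) \<le> n" if "i < n" for i
    using G that by (auto simp: Gfam_def SB_def PiE_def Pi_def)
  have phin: "int (Phi n G k n) = int n + (\<Sum>l<k. int (G l k)) - (\<Sum>l\<in>{k<..<n}. int (G k l))" if k: "k < n" for k
    using k outle[OF k] by (simp add: Phi_def of_nat_diff flip: of_nat_sum)
  have V: "\<forall>i j. \<not> (i < j \<and> j \<le> n) \<longrightarrow> Phi n G i j = 0"
    by (auto simp: Phi_def van)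
  have Fl: "(\<Sum>j\<in>{i<..n}. int (Phi n G i j)) - (\<Sum>k<i. int (Phi n G k i)) = specialN n i" if i: "i \<le> n" for i
  proof (cases "i < n")
    case True
    have ins: "{i<..n} = insert n {i<..<n}" using True by auto
    have "(\<Sum>j\<in>{i<..n}. int (Phi n G i j)) = int (Phi n G i n) + (\<Sum>j\<in>{i<..<n}. int (Phi n G i j))"
      unfolding ins by (subst sum.insert) auto
    also have "(\<Sum>j\<in>{i<..<n}. int (Phi n G i j)) = (\<Sum>j\<in>{i<..<n}. int (G i j))"
      using True by (intro sum.cong) (auto simp: Phi_def)
    also have "int (Phi n G i n) = int n + (\<Sum>k<i. int (G k i)) - (\<Sum>l\<in>{i<..<n}. int (G i l))"
      using phin[OF True] .
    finally have a: "(\<Sum>j\<in>{i<..n}. int (Phi n G i j)) = int n + (\<Sum>k<i. int (G k i))" by simp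
    have b: "(\<Sum>k<i. int (Phi n G k i)) = (\<Sum>k<i. int (G k i))"
      using True by (intro sum.cong) (auto simp: Phi_def)
    show ?thesis using a b True by (simp add: specialN_def)
  next
    case False
    then have i: "i = n" using i by simp
    have "(\<Sum>k<n. int (Phi n G k n)) = (\<Sum>k<n. int n + (\<Sum>l<k. int (G l k)) - (\<Sum>l\<in>{k<..<n}. int (G k l)))"
      by (rule sum.cong[OF refl], rule phin) simp
    also have "\<dots> = int n * int n + (\<Sum>k<n. \<Sum>l<k. int (G l k)) - (\<Sum>k<n. \<Sum>l\<in>{k<..<n}. int (G k l))"
      by (simp add: sum.distrib sum_subtractf)
    also have "(\<Sum>k<n. \<Sum>l<k. int (G l k)) = (\<Sum>k<n. \<Sum>l<n. int (G l k))"
    proof (rule sum.cong[OF refl])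
      fix k assume k: "k \<in> {..<n}"
      show "(\<Sum>l<k. int (G l k)) = (\<Sum>l<n. int (G l k))"
        using k by (intro sum.mono_neutral_left) (auto simp: van)
    qed
    also have "(\<Sum>k<n. \<Sum>l\<in>{k<..<n}. int (G k l)) = (\<Sum>k<n. \<Sum>l<n. int (G k l))"
    proof (rule sum.cong[OF refl])
      fix k assume k: "k \<in> {..<n}"
      show "(\<Sum>l\<in>{k<..<n}. int (G k l)) = (\<Sum>l<n. int (G k l))"
        using k by (intro sum.mono_neutral_left) (auto simp: van)
    qed
    also have "(\<Sum>k<n. \<Sum>l<n. int (G l k)) = (\<Sum>k<n. \<Sum>l<n. int (G k l))" by (rule sum.swap)
    finally have "(\<Sum>k<n. int (Phi n G k n)) = int n * int n" by simp
    then show ?thesis using i by (simp add: specialN_def power2_eq_square)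
  qed
  show ?thesis using V Fl by (simp add: KS_def)
qed

lemma Phi_inj: "inj_on (Phi n) (PiE {..<n} (Gfam n))"
proof (rule inj_onI)
  fix G H assume G: "G \<in> PiE {..<n} (Gfam n)" and H: "H \<in> PiE {..<n} (Gfam n)" and e: "Phi n G = Phi n H"
  have vanG: "G i j = 0" if "i < n" "j \<notin> {i<..<n}" for i j
    using G that by (auto simp: Gfam_def SB_def PiE_def Pi_def)
  have vanH: "H i j = 0" if "i < n" "j \<notin> {i<..<n}" for i j
    using H that by (auto simp: Gfam_def SB_def PiE_def Pi_def)
  show "G = H"
  proof (rule ext)
    fix i
    show "G i = H i"
    proof (cases "i < n")
      case False then show ?thesis using G H by (auto simp: PiE_def extensional_def)
    next
      case True
      show ?thesis
      proof (rule ext)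
        fix j
        show "G i j = H i j"
        proof (cases "j < n")
          case True
          have "Phi n G i j = Phi n H i j" using e by simp
          then show ?thesis using True \<open>i < n\<close> by (simp add: Phi_def)
        next
          case False then show ?thesis using vanG vanH True by auto
        qed
      qed
    qed
  qed
qed

lemma card_Gfam: "card (Gfam n i) = (n + (n - 1 - i)) choose n"
proof -
  have "card (SB {i<..<n} n) = (n + card {i<..<n}) choose n"
    using SB_card[of "{i<..<n}" n] by blast
  moreover have "card {i<..<n} = n - 1 - i" by simp
  ultimately show ?thesis unfolding Gfam_def by simp
qed

lemma kostant_ge_prod:
  "(\<Prod>i<n. (n + (n - 1 - i)) choose n) \<le> kostant n (specialN n)"
proof -
  have "(\<Prod>i<n. (n + (n - 1 - i)) choose n) = (\<Prod>i<n. card (Gfam n i))"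
    by (simp only: card_Gfam)
  also have "\<dots> = card (PiE {..<n} (Gfam n))" by (rule card_PiE[symmetric]) simp
  also have "\<dots> = card (Phi n ` PiE {..<n} (Gfam n))" by (rule card_image[OF Phi_inj, symmetric])
  also have "\<dots> \<le> card (KS n (specialN n))"
    by (rule card_mono[OF finite_KS]) (rule image_subsetI, erule Phi_in_KS)
  finally show ?thesis by (simp only: kostant_KS)
qed

lemma binom_step: "(a + 1) * ((n + (a + 1)) choose n) = (n + a + 1) * ((n + a) choose n)"
  using binomial_absorb_comp[of "n + a + 1" n] by (simp add: add.assoc)

lemma binom_subadd: "((n + (a + b)) choose n) \<le> ((n + a) choose n) * ((n + b) choose n)"
proof (induction a)
  case 0 then show ?case by simp
next
  case (Suc a)
  define X' where "X' = (n + (Suc a + b)) choose n"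
  define X where "X = (n + (a + b)) choose n"
  define Y' where "Y' = (n + Suc a) choose n"
  define Y where "Y = (n + a) choose n"
  define Z where "Z = (n + b) choose n"
  have IH: "X \<le> Y * Z" using Suc.IH unfolding X_def Y_def Z_def .
  have sx: "(a + b + 1) * X' = (n + (a + b) + 1) * X"
    using binom_step[of "a + b" n] unfolding X'_def X_def by (simp add: ac_simps)
  have sy: "(a + 1) * Y' = (n + a + 1) * Y"
    using binom_step[of a n] unfolding Y'_def Y_def by simp
  have ineq: "(a + 1) * (n + (a + b) + 1) \<le> (a + b + 1) * (n + a + 1)"
  proof -
    have "(a + 1) * (n + (a + b) + 1) = (a + 1) * (n + a + 1) + (a + 1) * b" by (simp add: algebra_simps)
    moreover have "(a + b + 1) * (n + a + 1) = (a + 1) * (n + a + 1) + b * (n + a + 1)" by (simp add: algebra_simps)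
    moreover have "(a + 1) * b \<le> b * (n + a + 1)" by (simp add: mult.commute)
    ultimately show ?thesis by linarith
  qed
  have "((a + 1) * (a + b + 1)) * X' = (a + 1) * ((n + (a + b) + 1) * X)"
    by (simp only: mult.assoc sx)
  also have "\<dots> \<le> (a + 1) * ((n + (a + b) + 1) * (Y * Z))"
    using IH by (intro mult_left_mono) auto
  also have "\<dots> = ((a + 1) * (n + (a + b) + 1)) * (Y * Z)" by (simp only: mult.assoc)
  also have "\<dots> \<le> ((a + b + 1) * (n + a + 1)) * (Y * Z)"
    using ineq by (rule mult_right_mono) simp
  also have "\<dots> = (a + b + 1) * (((n + a + 1) * Y) * Z)" by (simp only: mult.assoc)
  also have "\<dots> = (a + b + 1) * (((a + 1) * Y') * Z)" by (simp only: sy)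
  also have "\<dots> = ((a + 1) * (a + b + 1)) * (Y' * Z)" by (simp only: mult.assoc mult.commute mult.left_commute)
  finally have "((a + 1) * (a + b + 1)) * X' \<le> ((a + 1) * (a + b + 1)) * (Y' * Z)" .
  then have "X' \<le> Y' * Z" by (subst (asm) mult_le_cancel1) simp
  then show ?case unfolding X'_def Y'_def Z_def .
qed

lemma central: "4 ^ m \<le> (m + 1) * ((2 * m + 1) choose (m + 1))"
proof (induction m)
  case 0 then show ?case by simp
next
  case (Suc m)
  have e1: "Suc (Suc m) * (Suc (2 * m + 2) choose Suc (Suc m)) = Suc (2 * m + 2) * ((2 * m + 2) choose Suc m)"
    by (rule Suc_times_binomial)
  have e2: "Suc m * (Suc (2 * m + 1) choose Suc m) = Suc (2 * m + 1) * ((2 * m + 1) choose m)"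
    by (rule Suc_times_binomial)
  have e3: "(2 * m + 1) choose m = (2 * m + 1) choose (m + 1)"
    using binomial_symmetric[of m "2 * m + 1"] by simp
  have e4: "(2 * m + 2) choose Suc m = 2 * ((2 * m + 1) choose (m + 1))"
  proof -
    have "Suc m * ((2 * m + 2) choose Suc m) = Suc m * (2 * ((2 * m + 1) choose (m + 1)))"
      using e2 e3 by (simp add: algebra_simps)
    then show ?thesis by (subst (asm) mult_cancel1) simp
  qed
  have "4 ^ Suc m = 4 * 4 ^ m" by simp
  also have "\<dots> \<le> 4 * ((m + 1) * ((2 * m + 1) choose (m + 1)))" using Suc.IH by simp
  also have "\<dots> \<le> (2 * (2 * m + 3)) * ((2 * m + 1) choose (m + 1))"
  proof -
    have "(4 * (m + 1)) * ((2 * m + 1) choose (m + 1)) \<le> (2 * (2 * m + 3)) * ((2 * m + 1) choose (m + 1))"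
      by (rule mult_right_mono) simp_all
    then show ?thesis by (simp only: mult.assoc)
  qed
  also have "\<dots> = Suc (2 * m + 2) * ((2 * m + 2) choose Suc m)"
  proof -
    have "(2 * (2 * m + 3)) * ((2 * m + 1) choose (m + 1)) = Suc (2 * m + 2) * (2 * ((2 * m + 1) choose (m + 1)))"
      by (simp del: binomial_Suc_Suc add: algebra_simps)
    then show ?thesis unfolding e4 .
  qed
  also have "\<dots> = Suc (Suc m) * (Suc (2 * m + 2) choose Suc (Suc m))" by (rule e1[symmetric])
  finally have fin: "4 ^ Suc m \<le> Suc (Suc m) * (Suc (2 * m + 2) choose Suc (Suc m))" .
  have c1: "2 * Suc m + 1 = Suc (2 * m + 2)" by simp
  have c2: "Suc m + 1 = Suc (Suc m)" by simp
  show ?case unfolding c1 c2 by (rule fin)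
qed

lemma lower_explicit:
  assumes n: "n \<ge> 1"
  shows "ln (real (kostant n (specialN n))) \<ge> (real n)^2 * ln 2 - 3/2 * real n * ln (real n) - 1 * real n"
proof -
  define P where "P = (\<Prod>i<n. (n + (n - 1 - i)) choose n)"
  define c where "c = (n + (n - 1)) choose n"
  have KP: "P \<le> kostant n (specialN n)" unfolding P_def by (rule kostant_ge_prod)
  have P2: "P = (\<Prod>i<n. (n + i) choose n)"
  proof -
    have "(\<Prod>i<n. (\<lambda>i. (n + i) choose n) (n - Suc i)) = (\<Prod>i<n. (n + i) choose n)"
      by (rule prod.nat_diff_reindex)
    moreover have "(\<Prod>i<n. (\<lambda>i. (n + i) choose n) (n - Suc i)) = P"
      unfolding P_def by (intro prod.cong refl) simp
    ultimately show ?thesis by simp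
  qed
  have PP: "c ^ n \<le> P * P"
  proof -
    have "c ^ n = (\<Prod>i<n. c)" by simp
    also have "\<dots> \<le> (\<Prod>i<n. ((n + (n - 1 - i)) choose n) * ((n + i) choose n))"
    proof (rule prod_mono)
      fix i assume i: "i \<in> {..<n}"
      have "(n + ((n - 1 - i) + i)) choose n \<le> ((n + (n - 1 - i)) choose n) * ((n + i) choose n)"
        by (rule binom_subadd)
      moreover have "(n - 1 - i) + i = n - 1" using i by simp
      ultimately show "0 \<le> c \<and> c \<le> ((n + (n - 1 - i)) choose n) * ((n + i) choose n)"
        unfolding c_def by simp
    qed
    also have "\<dots> = P * P" unfolding prod.distrib P_def[symmetric] P2[symmetric] ..
    finally show ?thesis .
  qed
  have cen: "4 ^ (n - 1) \<le> n * c"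
  proof -
    have a: "4 ^ (n - 1) \<le> (n - 1 + 1) * ((2 * (n - 1) + 1) choose (n - 1 + 1))" by (rule central)
    have e2: "2 * (n - 1) + 1 = n + (n - 1)" using n by simp
    have e1: "n - 1 + 1 = n" using n by simp
    show ?thesis using a unfolding e2 e1 c_def .
  qed
  have "0 < c" unfolding c_def by (subst zero_less_binomial_iff) simp
  then have cpos: "c \<ge> 1" by simp
  have Ppos: "P \<ge> 1"
  proof -
    have "1 \<le> c ^ n" using cpos by simp
    then have "1 \<le> P * P" using PP by linarith
    then show ?thesis by (cases P) auto
  qed
  have rP: "real P \<ge> 1" using Ppos by simp
  have rc: "real c \<ge> 1" using cpos by simp
  have l1: "ln (real P) \<le> ln (real (kostant n (specialN n)))"
    using KP rP by simp
  have l2: "real n * ln (real c) \<le> 2 * ln (real P)"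
  proof -
    have "real c ^ n \<le> real P * real P" using PP by (metis of_nat_le_iff of_nat_mult of_nat_power)
    then have "ln (real c ^ n) \<le> ln (real P * real P)" using rc rP by (subst ln_le_cancel_iff) auto
    then show ?thesis using rc rP by (simp add: ln_realpow ln_mult)
  qed
  have l3: "real (n - 1) * (2 * ln 2) \<le> ln (real n) + ln (real c)"
  proof -
    have "(4::real) ^ (n - 1) \<le> real n * real c" using cen by (metis of_nat_le_iff of_nat_mult of_nat_power of_nat_numeral)
    then have "ln ((4::real) ^ (n - 1)) \<le> ln (real n * real c)" using rc n by (subst ln_le_cancel_iff) auto
    moreover have "ln ((4::real) ^ (n - 1)) = real (n - 1) * (2 * ln 2)"
    proof -
      have "ln (4::real) = 2 * ln 2" using ln_realpow[of 2 2] by simp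
      then show ?thesis by (simp add: ln_realpow)
    qed
    ultimately show ?thesis using rc n by (simp add: ln_mult)
  qed
  have rn1: "real (n - 1) = real n - 1" using n by simp
  have lnn: "ln (real n) \<ge> 0" using n by simp
  have l2b: "ln 2 \<le> (1::real)" using ln_2_less_1 by simp
  have l3': "(real n - 1) * (2 * ln 2) \<le> ln (real n) + ln (real c)" using l3 rn1 by simp
  have "real n * ((real n - 1) * (2 * ln 2)) \<le> real n * (ln (real n) + ln (real c))"
    by (rule mult_left_mono[OF l3']) simp
  then have "real n * (real n - 1) * (2 * ln 2) \<le> real n * (ln (real n) + ln (real c))"
    by (simp only: mult.assoc)
  then have key: "real n * (real n - 1) * (2 * ln 2) - real n * ln (real n) \<le> 2 * ln (real (kostant n (specialN n)))"
    using l1 l2 by (simp add: algebra_simps)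
  have "real n * ln 2 \<le> real n * 1" using l2b by (intro mult_left_mono) auto
  moreover have "0 \<le> real n * ln (real n)" using lnn by simp
  ultimately show ?thesis using key by (simp add: power2_eq_square algebra_simps)
qed

theorem corollary2p22:
  shows "(\<exists>C. eventually (\<lambda>n. ln (real (kostant n (specialN n)))
             \<le> (real n)^2 * (9 * ln 2 - 9/2 * ln 3) + C * real n * ln (real n)) at_top)
       \<and> (\<exists>D. eventually (\<lambda>n. ln (real (kostant n (specialN n)))
             \<ge> (real n)^2 * ln 2 - 3/2 * real n * ln (real n) - D * real n) at_top)"
proof
  have ev: "eventually (\<lambda>n::nat. 5/4 * real n^2 + 11/4 * real n + 3/2 + (real n + 1) * ln (2 * (real n + 1)) \<le> 1.26 * real n ^2) at_top"
    by real_asymp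
  have "eventually (\<lambda>n. ln (real (kostant n (specialN n)))
             \<le> (real n)^2 * (9 * ln 2 - 9/2 * ln 3) + 0 * real n * ln (real n)) at_top"
    using ev eventually_ge_at_top[of 1]
  proof eventually_elim
    case (elim n)
    have "ln (real (kostant n (specialN n))) \<le> 1.26 * real n ^2"
      using upper_explicit[OF elim(2)] elim(1) by linarith
    also have "\<dots> \<le> (real n)^2 * (9 * ln 2 - 9/2 * ln 3)"
    proof -
      have "(real n)^2 * 1.26 \<le> (real n)^2 * (9 * ln 2 - 9/2 * ln 3)"
        by (rule mult_left_mono[OF c0_bound]) simp
      then show ?thesis by (simp only: mult.commute[of "1.26::real" "(real n)^2"])
    qed
    finally show ?case by simp
  qed
  then show "\<exists>C. eventually (\<lambda>n. ln (real (kostant n (specialN n)))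
             \<le> (real n)^2 * (9 * ln 2 - 9/2 * ln 3) + C * real n * ln (real n)) at_top" by blast
next
  have "eventually (\<lambda>n. ln (real (kostant n (specialN n)))
             \<ge> (real n)^2 * ln 2 - 3/2 * real n * ln (real n) - 1 * real n) at_top"
    using eventually_ge_at_top[of 1]
    by eventually_elim (rule lower_explicit)
  then show "\<exists>D. eventually (\<lambda>n. ln (real (kostant n (specialN n)))
             \<ge> (real n)^2 * ln 2 - 3/2 * real n * ln (real n) - D * real n) at_top" by blast
qed

end
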